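(* Let $n\ge 3$ and let $\mathbb{F}$ be a field of characteristic $0$ or of odd prime characteristic $p$. In the group algebra $\mathbb{F}D_{2n}$: (i) the set $\{a^i-a^{-i},\ (a^i-a^{-i})b \mid i=1,2,\dots,\lfloor\frac{n-1}{2}\rfloor\}$ is an $\mathbb{F}$-basis of $\bar{C}(b)$; (ii) the set $\{a^i-a^{-i},\ a(a^i-a^{-i})b \mid i=1,2,\dots,\lfloor\frac{n-1}{2}\rfloor\}$ is an $\mathbb{F}$-basis of $\bar{C}(ab)$.
   Context: $D_{2n}=\langle a,b\mid a^n=1,\ b^2=1,\ (ab)^2=1\rangle$ is the dihedral group of order $2n$, whose elements are $a^ib^j$ with $0\le i\le n-1$, $0\le j\le 1$. $\mathbb{F}D_{2n}$ is its group algebra over $\mathbb{F}$. For $\beta\in\mathbb{F}D_{2n}$, the anti-centralizer of $\beta$ is $\bar{C}(\beta)=\{\alpha\in\mathbb{F}D_{2n}\mid \alpha\beta=-\beta\alpha\}$, an $\mathbb{F}$-subspace. $\lfloor x\rfloor$ denotes the floor of $x$. *)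

theory Defs
  imports Main "HOL.Vector_Spaces" "HOL-Library.Function_Algebras" "HOL-Computational_Algebra.Primes"
begin

text \<open>Dihedral group D_{2n}: the element a^i b^j (0 <= i < n, 0 <= j < 2) is encoded
  as the pair (i, j).  Relations a^n = 1, b^2 = 1, (ab)^2 = 1 give b a^k = a^(-k) b, hence
  (a^i b^j)(a^k b^l) = a^(i + (-1)^j k) b^(j+l).\<close>

definition dih :: "nat \<Rightarrow> (nat \<times> nat) set" where
  "dih n = {0..<n} \<times> {0..<2}"

definition dmul :: "nat \<Rightarrow> nat \<times> nat \<Rightarrow> nat \<times> nat \<Rightarrow> nat \<times> nat" where
  "dmul n g h = (case g of (i, j) \<Rightarrow> case h of (k, l) \<Rightarrow>
      ((if j = 0 then i + k else i + (n - k)) mod n, (j + l) mod 2))"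

definition galg :: "nat \<Rightarrow> (nat \<times> nat \<Rightarrow> 'a::field) set" where
  "galg n = {\<alpha>. \<forall>g. g \<notin> dih n \<longrightarrow> \<alpha> g = 0}"

definition gscale :: "'a::field \<Rightarrow> (nat \<times> nat \<Rightarrow> 'a) \<Rightarrow> (nat \<times> nat \<Rightarrow> 'a)" where
  "gscale c \<alpha> = (\<lambda>g. c * \<alpha> g)"

definition gmul :: "nat \<Rightarrow> (nat \<times> nat \<Rightarrow> 'a::field) \<Rightarrow> (nat \<times> nat \<Rightarrow> 'a) \<Rightarrow> (nat \<times> nat \<Rightarrow> 'a)" where
  "gmul n \<alpha> \<beta> = (\<lambda>g. \<Sum>(h, k) \<in> {(h, k). h \<in> dih n \<and> k \<in> dih n \<and> dmul n h k = g}. \<alpha> h * \<beta> k)"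

definition gel :: "nat \<times> nat \<Rightarrow> nat \<times> nat \<Rightarrow> 'a::field" where
  "gel g = (\<lambda>h. if h = g then 1 else 0)"

definition ael :: "nat \<Rightarrow> int \<Rightarrow> nat \<times> nat \<Rightarrow> 'a::field" where
  "ael n i = gel (nat (i mod int n), 0)"

definition bel :: "nat \<times> nat \<Rightarrow> 'a::field" where
  "bel = gel (0, 1)"

definition anticent :: "nat \<Rightarrow> (nat \<times> nat \<Rightarrow> 'a::field) \<Rightarrow> (nat \<times> nat \<Rightarrow> 'a) set" where
  "anticent n \<beta> = {\<alpha> \<in> galg n. gmul n \<alpha> \<beta> = - gmul n \<beta> \<alpha>}"

definition is_basis_of :: "(nat \<times> nat \<Rightarrow> 'a::field) set \<Rightarrow> (nat \<times> nat \<Rightarrow> 'a) set \<Rightarrow> bool" where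
  "is_basis_of W S \<longleftrightarrow> S \<subseteq> W \<and> \<not> module.dependent gscale S \<and> module.span gscale S = W"

end

theory Submission
  imports Defs
begin

lemma gscale_module: "module (gscale :: 'a::field \<Rightarrow> _)"
  by unfold_locales (auto simp: gscale_def fun_eq_iff algebra_simps)

lemma fun_sum_apply: "(sum f A) x = sum (\<lambda>a. f a x) A"
  by (induction A rule: infinite_finite_induct) auto

lemma finite_dih: "finite (dih n)" by (simp add: dih_def)

lemma gmul_alt: "gmul n \<alpha> \<beta> g =
  (\<Sum>h\<in>dih n. \<Sum>k\<in>dih n. if dmul n h k = g then \<alpha> h * \<beta> k else 0)"
proof -
  have "{(h, k). h \<in> dih n \<and> k \<in> dih n \<and> dmul n h k = g} = {x \<in> dih n \<times> dih n. dmul n (fst x) (snd x) = g}"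
    by auto
  then have "gmul n \<alpha> \<beta> g = (\<Sum>x\<in>dih n \<times> dih n. if dmul n (fst x) (snd x) = g then \<alpha> (fst x) * \<beta> (snd x) else 0)"
    unfolding gmul_def by (simp add: sum.inter_filter finite_dih case_prod_beta)
  also have "\<dots> = (\<Sum>h\<in>dih n. \<Sum>k\<in>dih n. if dmul n h k = g then \<alpha> h * \<beta> k else 0)"
    unfolding sum.cartesian_product by (simp add: case_prod_beta)
  finally show ?thesis .
qed

lemma gmul_right_gel:
  assumes "y \<in> dih n"
  shows "gmul n \<alpha> (gel y) g = (\<Sum>h\<in>dih n. if dmul n h y = g then \<alpha> h else 0)"
  unfolding gmul_alt
proof (rule sum.cong[OF refl])
  fix h
  have "(\<Sum>k\<in>dih n. if dmul n h k = g then \<alpha> h * gel y k else 0)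
     = (\<Sum>k\<in>dih n. if k = y then (if dmul n h y = g then \<alpha> h else 0) else 0)"
    by (rule sum.cong) (auto simp: gel_def)
  also have "\<dots> = (if dmul n h y = g then \<alpha> h else 0)"
    using assms by (simp add: finite_dih)
  finally show "(\<Sum>k\<in>dih n. if dmul n h k = g then \<alpha> h * gel y k else 0) = (if dmul n h y = g then \<alpha> h else 0)" .
qed

lemma gmul_left_gel:
  assumes "x \<in> dih n"
  shows "gmul n (gel x) \<alpha> g = (\<Sum>k\<in>dih n. if dmul n x k = g then \<alpha> k else 0)"
  unfolding gmul_alt
  apply (subst sum.swap)
proof (rule sum.cong[OF refl])
  fix k
  have "(\<Sum>h\<in>dih n. if dmul n h k = g then gel x h * \<alpha> k else 0)
     = (\<Sum>h\<in>dih n. if h = x then (if dmul n x k = g then \<alpha> k else 0) else 0)"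
    by (rule sum.cong) (auto simp: gel_def)
  also have "\<dots> = (if dmul n x k = g then \<alpha> k else 0)"
    using assms by (simp add: finite_dih)
  finally show "(\<Sum>h\<in>dih n. if dmul n h k = g then gel x h * \<alpha> k else 0) = (if dmul n x k = g then \<alpha> k else 0)" .
qed

lemma sum_unique_dih:
  assumes "r \<in> dih n" "\<And>h. h \<in> dih n \<Longrightarrow> P h \<longleftrightarrow> h = r"
  shows "(\<Sum>h\<in>dih n. if P h then f h else 0) = f r"
proof -
  have "(\<Sum>h\<in>dih n. if P h then f h else 0) = (\<Sum>h\<in>dih n. if h = r then f h else 0)"
    by (rule sum.cong) (use assms in auto)
  also have "\<dots> = f r" using assms by (simp add: finite_dih)
  finally show ?thesis .
qed

lemma dmul_in: "n > 0 \<Longrightarrow> dmul n x y \<in> dih n"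
  by (auto simp: dmul_def dih_def split: prod.splits)

lemma gmul_outside: assumes "n > 0" "g \<notin> dih n" shows "gmul n \<alpha> \<beta> g = 0"
proof -
  have "\<And>h k. dmul n h k \<noteq> g" using assms dmul_in by metis
  then show ?thesis unfolding gmul_alt by simp
qed

lemma gmul_gel_gel: assumes "x \<in> dih n" "y \<in> dih n" shows "gmul n (gel x) (gel y) = gel (dmul n x y)"
proof
  fix g
  have "gmul n (gel x) (gel y) g = (\<Sum>h\<in>dih n. if dmul n h y = g then gel x h else 0)"
    using assms by (simp add: gmul_right_gel)
  also have "\<dots> = (\<Sum>h\<in>dih n. if h = x then (if dmul n x y = g then 1 else 0) else 0)"
    by (rule sum.cong) (auto simp: gel_def)
  also have "\<dots> = gel (dmul n x y) g" using assms by (auto simp: finite_dih gel_def)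
  finally show "gmul n (gel x) (gel y) g = gel (dmul n x y) g" .
qed

lemma gmul_diff_left: "gmul n (\<alpha> - \<beta>) \<gamma> = gmul n \<alpha> \<gamma> - gmul n \<beta> \<gamma>"
proof
  fix g
  have "gmul n (\<alpha> - \<beta>) \<gamma> g = (\<Sum>h\<in>dih n. \<Sum>k\<in>dih n. (if dmul n h k = g then \<alpha> h * \<gamma> k else 0) - (if dmul n h k = g then \<beta> h * \<gamma> k else 0))"
    unfolding gmul_alt by (intro sum.cong refl) (simp add: algebra_simps)
  then show "gmul n (\<alpha> - \<beta>) \<gamma> g = (gmul n \<alpha> \<gamma> - gmul n \<beta> \<gamma>) g"
    by (simp add: sum_subtractf gmul_alt)
qed

lemma gmul_diff_right: "gmul n \<gamma> (\<alpha> - \<beta>) = gmul n \<gamma> \<alpha> - gmul n \<gamma> \<beta>"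
proof
  fix g
  have "gmul n \<gamma> (\<alpha> - \<beta>) g = (\<Sum>h\<in>dih n. \<Sum>k\<in>dih n. (if dmul n h k = g then \<gamma> h * \<alpha> k else 0) - (if dmul n h k = g then \<gamma> h * \<beta> k else 0))"
    unfolding gmul_alt by (intro sum.cong refl) (simp add: algebra_simps)
  then show "gmul n \<gamma> (\<alpha> - \<beta>) g = (gmul n \<gamma> \<alpha> - gmul n \<gamma> \<beta>) g"
    by (simp add: sum_subtractf gmul_alt)
qed

lemma mod_2n: "a < 2*n \<Longrightarrow> a mod (n::nat) = (if a < n then a else a - n)"
  by (simp add: le_mod_geq)

lemma neg_self_zero: "(2::'a::field) \<noteq> 0 \<Longrightarrow> (x::'a) = - x \<Longrightarrow> x = 0"
proof -
  assume "(2::'a) \<noteq> 0" "x = - x"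
  then have "2 * x = 0" by (metis add_eq_0_iff mult_2)
  with \<open>(2::'a) \<noteq> 0\<close> show "x = 0" by simp
qed

lemma anticent_char:
  fixes \<beta> :: "nat \<times> nat \<Rightarrow> 'a::field"
  assumes n: "n > 0"
    and H1: "\<And>\<alpha> g. g \<in> dih n \<Longrightarrow> gmul n \<alpha> \<beta> g = \<alpha> (\<rho> g)"
    and H2: "\<And>\<alpha> g. g \<in> dih n \<Longrightarrow> gmul n \<beta> \<alpha> g = \<alpha> (\<tau> (\<rho> g))"
    and H4: "\<And>x. x \<in> dih n \<Longrightarrow> \<exists>g\<in>dih n. \<rho> g = x"
    and H6: "\<And>g. g \<in> dih n \<Longrightarrow> \<rho> g \<in> dih n"
  shows "anticent n \<beta> = {\<alpha> \<in> galg n. \<forall>x\<in>dih n. \<alpha> (\<tau> x) = - \<alpha> x}"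
proof (intro set_eqI iffI)
  fix \<alpha> assume a: "\<alpha> \<in> anticent n \<beta>"
  then have g: "\<alpha> \<in> galg n" and e: "gmul n \<alpha> \<beta> = - gmul n \<beta> \<alpha>" by (auto simp: anticent_def)
  have "\<alpha> (\<tau> x) = - \<alpha> x" if x: "x \<in> dih n" for x
  proof -
    obtain g where gd: "g \<in> dih n" "\<rho> g = x" using H4 x by blast
    have "gmul n \<alpha> \<beta> g = - gmul n \<beta> \<alpha> g" using e by simp
    then show ?thesis using H1 H2 gd by simp
  qed
  with g show "\<alpha> \<in> {\<alpha> \<in> galg n. \<forall>x\<in>dih n. \<alpha> (\<tau> x) = - \<alpha> x}" by simp
next
  fix \<alpha> :: "nat \<times> nat \<Rightarrow> 'a" assume "\<alpha> \<in> {\<alpha> \<in> galg n. \<forall>x\<in>dih n. \<alpha> (\<tau> x) = - \<alpha> x}"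
  then have g: "\<alpha> \<in> galg n" and c: "\<And>x. x \<in> dih n \<Longrightarrow> \<alpha> (\<tau> x) = - \<alpha> x" by auto
  have "gmul n \<alpha> \<beta> = - gmul n \<beta> \<alpha>"
  proof
    fix g show "gmul n \<alpha> \<beta> g = (- gmul n \<beta> \<alpha>) g"
    proof (cases "g \<in> dih n")
      case True
      then show ?thesis using H1 H2 H6 c[of "\<rho> g"] by simp
    next
      case False
      then show ?thesis by (simp add: gmul_outside[OF n False])
    qed
  qed
  with g show "\<alpha> \<in> anticent n \<beta>" by (simp add: anticent_def)
qed

lemma basis_generic:
  fixes \<tau> :: "nat \<times> nat \<Rightarrow> nat \<times> nat" and w :: "'k \<Rightarrow> nat \<times> nat" and I :: "'k set"
    and W S :: "(nat \<times> nat \<Rightarrow> 'a::field) set"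
  assumes W: "W = {\<alpha> \<in> galg n. \<forall>x\<in>dih n. \<alpha> (\<tau> x) = - \<alpha> x}"
    and tau_in: "\<And>x. x \<in> dih n \<Longrightarrow> \<tau> x \<in> dih n"
    and tau_inv: "\<And>x. x \<in> dih n \<Longrightarrow> \<tau> (\<tau> x) = x"
    and w_in: "\<And>k. k \<in> I \<Longrightarrow> w k \<in> dih n"
    and inj: "inj_on w I"
    and disj: "\<And>k k'. k \<in> I \<Longrightarrow> k' \<in> I \<Longrightarrow> w k \<noteq> \<tau> (w k')"
    and cover: "\<And>g. g \<in> dih n \<Longrightarrow> (\<exists>k\<in>I. g = w k \<or> g = \<tau> (w k)) \<or> \<tau> g = g"
    and two: "(2::'a) \<noteq> 0"
    and fin: "finite I"
    and S: "S = (\<lambda>k. gel (w k) - gel (\<tau> (w k))) ` I"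
  shows "is_basis_of W S"
proof -
  interpret M: module "gscale :: 'a \<Rightarrow> _" by (rule gscale_module)
  define e where "e k = (gel (w k) - gel (\<tau> (w k)) :: nat \<times> nat \<Rightarrow> 'a)" for k
  have S': "S = e ` I" using S by (simp add: e_def[abs_def])
  have eval: "e k' (w k) = (if k' = k then 1 else 0)" if "k \<in> I" "k' \<in> I" for k k'
    using that inj disj[of k k'] by (auto simp: e_def gel_def inj_on_def)
  have e_tau: "e k (\<tau> x) = - e k x" if "k \<in> I" "x \<in> dih n" for k x
  proof -
    have 1: "\<tau> x = w k \<longleftrightarrow> x = \<tau> (w k)" using that tau_inv w_in by metis
    have 2: "\<tau> x = \<tau> (w k) \<longleftrightarrow> x = w k" using that tau_inv w_in by metis
    show ?thesis unfolding e_def gel_def using 1 2 by auto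
  qed
  have e_out: "e k g = 0" if "k \<in> I" "g \<notin> dih n" for k g
    using that w_in[OF that(1)] tau_in[OF w_in[OF that(1)]] by (auto simp: e_def gel_def)
  have SW: "S \<subseteq> W"
    unfolding S' W using e_tau e_out by (auto simp: galg_def)
  have ind: "\<not> M.dependent S"
  proof
    assume "M.dependent S"
    then obtain t u v where t: "finite t" "t \<subseteq> S" "(\<Sum>v\<in>t. gscale (u v) v) = 0" "v \<in> t" "u v \<noteq> 0"
      unfolding M.dependent_explicit by blast
    obtain k where k: "k \<in> I" "v = e k" using t S' by auto
    have val: "v' (w k) = (if v' = v then 1 else 0)" if v't: "v' \<in> t" for v'
    proof -
      obtain k' where "k' \<in> I" "v' = e k'" using v't t S' by auto
      then show ?thesis using eval[of k k'] eval[of k k] k by auto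
    qed
    have "0 = (\<Sum>v\<in>t. gscale (u v) v) (w k)" using t by simp
    also have "\<dots> = (\<Sum>v'\<in>t. u v' * (if v' = v then 1 else 0))"
      unfolding fun_sum_apply gscale_def using val by (intro sum.cong) auto
    also have "\<dots> = u v" using t by (simp add: if_distrib cong: if_cong)
    finally show False using t by simp
  qed
  have sub: "M.subspace W"
    unfolding M.subspace_def W by (auto simp: galg_def gscale_def)
  have "W \<subseteq> M.span S"
  proof
    fix \<alpha> assume a: "\<alpha> \<in> W"
    then have ag: "\<And>g. g \<notin> dih n \<Longrightarrow> \<alpha> g = 0" and at: "\<And>x. x \<in> dih n \<Longrightarrow> \<alpha> (\<tau> x) = - \<alpha> x"
      by (auto simp: W galg_def)
    have eq: "\<alpha> = (\<Sum>k\<in>I. gscale (\<alpha> (w k)) (e k))"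
    proof
      fix g
      have R: "(\<Sum>k\<in>I. gscale (\<alpha> (w k)) (e k)) g = (\<Sum>k\<in>I. \<alpha> (w k) * e k g)"
        by (simp add: fun_sum_apply gscale_def)
      show "\<alpha> g = (\<Sum>k\<in>I. gscale (\<alpha> (w k)) (e k)) g"
        unfolding R
      proof (cases "g \<in> dih n")
        case False
        then show "\<alpha> g = (\<Sum>k\<in>I. \<alpha> (w k) * e k g)" using ag e_out by simp
      next
        case True
        from cover[OF True] show "\<alpha> g = (\<Sum>k\<in>I. \<alpha> (w k) * e k g)"
        proof (elim disjE bexE)
          fix k0 assume k0: "k0 \<in> I" "g = w k0"
          have "(\<Sum>k\<in>I. \<alpha> (w k) * e k g) = (\<Sum>k\<in>I. if k = k0 then \<alpha> (w k0) else 0)"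
            using eval k0 by (intro sum.cong) auto
          also have "\<dots> = \<alpha> g" using k0 fin by simp
          finally show ?thesis by simp
        next
          fix k0 assume k0: "k0 \<in> I" "g = \<tau> (w k0)"
          have "(\<Sum>k\<in>I. \<alpha> (w k) * e k g) = (\<Sum>k\<in>I. if k = k0 then - \<alpha> (w k0) else 0)"
            using eval k0 e_tau w_in by (intro sum.cong) auto
          also have "\<dots> = \<alpha> g" using k0 fin at w_in by simp
          finally show ?thesis by simp
        next
          assume tg: "\<tau> g = g"
          have "e k g = 0" if "k \<in> I" for k
            using neg_self_zero[OF two] e_tau[OF that True] tg by metis
          moreover have "\<alpha> g = 0" using neg_self_zero[OF two] at[OF True] tg by metis
          ultimately show ?thesis by simp
        qed
      qed
    qed
    have "(\<Sum>k\<in>I. gscale (\<alpha> (w k)) (e k)) \<in> M.span S"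
      by (intro M.span_sum M.span_scale M.span_base) (auto simp: S')
    then show "\<alpha> \<in> M.span S" using eq by simp
  qed
  moreover have "M.span S \<subseteq> W" using M.span_minimal[OF SW sub] .
  ultimately show ?thesis unfolding is_basis_of_def using SW ind by blast
qed

definition rho1 :: "nat \<times> nat \<Rightarrow> nat \<times> nat" where "rho1 g = (fst g, 1 - snd g)"
definition tau1 :: "nat \<Rightarrow> nat \<times> nat \<Rightarrow> nat \<times> nat" where "tau1 n g = ((n - fst g) mod n, snd g)"
definition rho2 :: "nat \<Rightarrow> nat \<times> nat \<Rightarrow> nat \<times> nat" where
  "rho2 n g = (if snd g = 1 then ((fst g + n - 1) mod n, 0) else ((fst g + 1) mod n, 1))"
definition tau2 :: "nat \<Rightarrow> nat \<times> nat \<Rightarrow> nat \<times> nat" where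
  "tau2 n g = ((if snd g = 0 then n - fst g else n + 2 - fst g) mod n, snd g)"

lemma r1: "n > 0 \<Longrightarrow> i < n \<Longrightarrow> j < 2 \<Longrightarrow> p < n \<Longrightarrow> q < 2 \<Longrightarrow>
   dmul n (i,j) (0,1) = (p,q) \<longleftrightarrow> (i,j) = (p,1-q)"
  by (auto simp: dmul_def mod_2n)

lemma l1: "n > 0 \<Longrightarrow> k < n \<Longrightarrow> l < 2 \<Longrightarrow> p < n \<Longrightarrow> q < 2 \<Longrightarrow>
   dmul n (0,1) (k,l) = (p,q) \<longleftrightarrow> (k,l) = ((n-p) mod n,1-q)"
  by (auto simp: dmul_def mod_2n)

lemma r2: "n \<ge> 3 \<Longrightarrow> i < n \<Longrightarrow> j < 2 \<Longrightarrow> p < n \<Longrightarrow> q < 2 \<Longrightarrow>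
   dmul n (i,j) (1,1) = (p,q) \<longleftrightarrow> (i,j) = (if q=1 then ((p+n-1) mod n, 0) else ((p+1) mod n, 1))"
  by (auto simp: dmul_def mod_2n)

lemma l2: "n \<ge> 3 \<Longrightarrow> k < n \<Longrightarrow> l < 2 \<Longrightarrow> p < n \<Longrightarrow> q < 2 \<Longrightarrow>
   dmul n (1,1) (k,l) = (p,q) \<longleftrightarrow> (k,l) = ((1+n-p) mod n,1-q)"
  by (auto simp: dmul_def mod_2n)

lemma t2: "(n::nat) \<ge> 3 \<Longrightarrow> p < n \<Longrightarrow> q < 2 \<Longrightarrow> (1+n-p) mod n = (if q = 1 then (n - (p+n-1) mod n) mod n else (n + 2 - (p+1) mod n) mod n)"
  by (auto simp: mod_2n)

lemma dih_iff: "(p, q) \<in> dih n \<longleftrightarrow> p < n \<and> q < 2" by (simp add: dih_def)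

lemma anticent_b:
  assumes "n \<ge> 3"
  shows "anticent n (bel :: nat \<times> nat \<Rightarrow> 'a::field) = {\<alpha> \<in> galg n. \<forall>x\<in>dih n. \<alpha> (tau1 n x) = - \<alpha> x}"
proof (rule anticent_char[where \<rho> = rho1])
  show n: "n > 0" using assms by simp
  have b: "(0,1) \<in> dih n" using n by (simp add: dih_iff)
  show "gmul n \<alpha> bel g = \<alpha> (rho1 g)" if gd: "g \<in> dih n" for \<alpha> :: "nat \<times> nat \<Rightarrow> 'a" and g
  proof -
    obtain p q where g: "g = (p,q)" "p < n" "q < 2" using gd by (cases g) (auto simp: dih_iff)
    show ?thesis unfolding bel_def gmul_right_gel[OF b]
      by (rule sum_unique_dih) (use g n r1 in \<open>auto simp: dih_iff rho1_def\<close>)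
  qed
  show "gmul n bel \<alpha> g = \<alpha> (tau1 n (rho1 g))" if gd: "g \<in> dih n" for \<alpha> :: "nat \<times> nat \<Rightarrow> 'a" and g
  proof -
    obtain p q where g: "g = (p,q)" "p < n" "q < 2" using gd by (cases g) (auto simp: dih_iff)
    show ?thesis unfolding bel_def gmul_left_gel[OF b]
      by (rule sum_unique_dih) (use g n l1 in \<open>auto simp: dih_iff rho1_def tau1_def\<close>)
  qed
  show "\<exists>g\<in>dih n. rho1 g = x" if "x \<in> dih n" for x
    using that by (intro bexI[of _ "(fst x, 1 - snd x)"]) (auto simp: rho1_def dih_def)
  show "rho1 g \<in> dih n" if "g \<in> dih n" for g
    using that by (auto simp: rho1_def dih_def)
qed

lemma ab_gel: "n \<ge> 3 \<Longrightarrow> gmul n (ael n 1) bel = (gel (1,1) :: nat \<times> nat \<Rightarrow> 'a::field)"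
  unfolding ael_def bel_def
  by (subst gmul_gel_gel) (auto simp: dih_iff dmul_def)

lemma anticent_ab:
  assumes "n \<ge> 3"
  shows "anticent n (gmul n (ael n 1) bel :: nat \<times> nat \<Rightarrow> 'a::field) = {\<alpha> \<in> galg n. \<forall>x\<in>dih n. \<alpha> (tau2 n x) = - \<alpha> x}"
  unfolding ab_gel[OF assms]
proof (rule anticent_char[where \<rho> = "rho2 n"])
  show n: "n > 0" using assms by simp
  have b: "(1,1) \<in> dih n" using assms by (simp add: dih_iff)
  show "gmul n \<alpha> (gel (1,1)) g = \<alpha> (rho2 n g)" if gd: "g \<in> dih n" for \<alpha> :: "nat \<times> nat \<Rightarrow> 'a" and g
  proof -
    obtain p q where g: "g = (p,q)" "p < n" "q < 2" using gd by (cases g) (auto simp: dih_iff)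
    show ?thesis unfolding gmul_right_gel[OF b]
      by (rule sum_unique_dih) (use g n r2[OF assms] in \<open>auto simp: dih_iff rho2_def\<close>)
  qed
  show "gmul n (gel (1,1)) \<alpha> g = \<alpha> (tau2 n (rho2 n g))" if gd: "g \<in> dih n" for \<alpha> :: "nat \<times> nat \<Rightarrow> 'a" and g
  proof -
    obtain p q where g: "g = (p,q)" "p < n" "q < 2" using gd by (cases g) (auto simp: dih_iff)
    have "tau2 n (rho2 n g) = ((1+n-p) mod n, 1 - q)"
      using t2[OF assms g(2,3)] g by (auto simp: rho2_def tau2_def)
    then show ?thesis unfolding gmul_left_gel[OF b]
      by (intro sum_unique_dih) (use g n l2[OF assms] in \<open>auto simp: dih_iff\<close>)
  qed
  show "\<exists>g\<in>dih n. rho2 n g = x" if xd: "x \<in> dih n" for x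
  proof -
    obtain p q where x: "x = (p,q)" "p < n" "q < 2" using xd by (cases x) (auto simp: dih_iff)
    show ?thesis
    proof (cases "q = 1")
      case True
      then show ?thesis using x n
        by (intro bexI[of _ "((p+n-1) mod n, 0)"]) (auto simp: rho2_def dih_def mod_2n)
    next
      case False
      then show ?thesis using x n
        by (intro bexI[of _ "((p+1) mod n, 1)"]) (auto simp: rho2_def dih_def mod_2n)
    qed
  qed
  show "rho2 n g \<in> dih n" if "g \<in> dih n" for g
    using that n by (auto simp: rho2_def dih_def)
qed

lemma two_ne_zero_char:
  assumes "CHAR('a::field) = 0 \<or> (prime (CHAR('a)) \<and> odd (CHAR('a)))"
  shows "(2::'a) \<noteq> 0"
proof
  assume "(2::'a) = 0"
  then have "of_nat 2 = (0::'a)" by simp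
  then have d: "CHAR('a) dvd 2" by (simp only: of_nat_eq_0_iff_char_dvd)
  from assms show False
  proof
    assume "CHAR('a) = 0" with d show False by simp
  next
    assume p: "prime (CHAR('a)) \<and> odd (CHAR('a))"
    have "CHAR('a) \<le> 2" using d by (simp add: dvd_imp_le)
    moreover have "CHAR('a) > 1" using p prime_gt_1_nat by blast
    ultimately have "CHAR('a) = 2" by arith
    with p show False by simp
  qed
qed

lemma ael_pos: "0 < i \<Longrightarrow> i < n \<Longrightarrow> ael n (int i) = gel (i, 0)"
proof -
  assume a: "0 < i" "i < n"
  have "int i mod int n = int i" using a by (intro mod_pos_pos_trivial) auto
  then show ?thesis unfolding ael_def by simp
qed

lemma ael_neg: "0 < i \<Longrightarrow> i < n \<Longrightarrow> ael n (- int i) = gel (n - i, 0)"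
proof -
  assume a: "0 < i" "i < n"
  have 1: "int i mod int n = int i" using a by (intro mod_pos_pos_trivial) auto
  have e1: "(- int i) mod int n = int n - int i"
    using a 1 zmod_zminus1_eq_if[of "int i" "int n"] by simp
  have e2: "int n - int i = int (n - i)" using a by (intro of_nat_diff[symmetric]) simp
  have "nat ((- int i) mod int n) = n - i" unfolding e1 e2 nat_int ..
  then show ?thesis unfolding ael_def by simp
qed

theorem lemma3p2:
  fixes n :: nat
  assumes "n \<ge> 3"
    and "CHAR('a::field) = 0 \<or> (prime (CHAR('a)) \<and> odd (CHAR('a)))"
  shows "is_basis_of (anticent n (bel :: nat \<times> nat \<Rightarrow> 'a))
           ((\<lambda>i. ael n (int i) - ael n (- int i)) ` {1..(n - 1) div 2} \<union>
            (\<lambda>i. gmul n (ael n (int i) - ael n (- int i)) bel) ` {1..(n - 1) div 2})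
       \<and> is_basis_of (anticent n (gmul n (ael n 1) (bel :: nat \<times> nat \<Rightarrow> 'a)))
           ((\<lambda>i. ael n (int i) - ael n (- int i)) ` {1..(n - 1) div 2} \<union>
            (\<lambda>i. gmul n (gmul n (ael n 1) (ael n (int i) - ael n (- int i))) bel) ` {1..(n - 1) div 2})"
proof -
  define m where "m = (n - 1) div 2"
  have m1: "2 * m \<le> n - 1" "n - 1 \<le> 2 * m + 1" unfolding m_def by auto
  have n3: "n \<ge> 3" by fact
  have two: "(2::'a) \<noteq> 0" using two_ne_zero_char[OF assms(2)] .
  define A where "A = {1..m}"
  define I where "I = A \<times> {0::nat, 1}"
  have finI: "finite I" unfolding I_def A_def by simp
  have inA: "\<And>i. i \<in> A \<longleftrightarrow> 1 \<le> i \<and> i \<le> m" unfolding A_def by simp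
  have u: "ael n (int i) - ael n (- int i) = (gel (i,0) - gel (n-i,0) :: nat \<times> nat \<Rightarrow> 'a)" if "i \<in> A" for i
  proof -
    have "0 < i" "i < n" using that m1 n3 inA by auto
    then show ?thesis by (simp add: ael_pos ael_neg)
  qed
  have din: "(i,j) \<in> dih n" if "i < n" "j < 2" for i j using that by (simp add: dih_iff)
  have P1: "is_basis_of (anticent n (bel :: nat \<times> nat \<Rightarrow> 'a))
           ((\<lambda>i. ael n (int i) - ael n (- int i)) ` {1..(n - 1) div 2} \<union>
            (\<lambda>i. gmul n (ael n (int i) - ael n (- int i)) bel) ` {1..(n - 1) div 2})"
  proof (rule basis_generic[where \<tau> = "tau1 n" and w = "\<lambda>k. k" and I = I, OF anticent_b[OF n3] _ _ _ _ _ _ two finI])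
    show "tau1 n x \<in> dih n" if "x \<in> dih n" for x using that n3 by (auto simp: tau1_def dih_def)
    show "tau1 n (tau1 n x) = x" if "x \<in> dih n" for x using that n3 by (auto simp: tau1_def dih_def mod_2n)
    show "k \<in> dih n" if "k \<in> I" for k using that m1 n3 by (auto simp: I_def inA dih_def)
    show "inj_on (\<lambda>k. k) I" by simp
    show "k \<noteq> tau1 n k'" if kI: "k \<in> I" "k' \<in> I" for k k'
    proof -
      obtain i j i' j' where kk: "k = (i,j)" "k' = (i',j')" "1 \<le> i" "i \<le> m" "1 \<le> i'" "i' \<le> m"
        using kI by (auto simp: I_def inA)
      have "(n - i') mod n = n - i'" using kk m1 n3 by simp
      moreover have "i \<noteq> n - i'" using kk m1 n3 by linarith
      ultimately show ?thesis using kk by (simp add: tau1_def)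
    qed
    show "(\<exists>k\<in>I. g = k \<or> g = tau1 n k) \<or> tau1 n g = g" if gd: "g \<in> dih n" for g
    proof -
      obtain p q where g: "g = (p,q)" "p < n" "q < 2" using gd by (cases g) (auto simp: dih_iff)
      have q: "q \<in> {0,1}" using g by auto
      consider "p = 0" | "1 \<le> p \<and> p \<le> m" | "n - m \<le> p" | "m < p \<and> p < n - m" by linarith
      then show ?thesis
      proof cases
        case 1 then show ?thesis using g by (simp add: tau1_def)
      next
        case 2 then have "g \<in> I" using g q by (auto simp: I_def inA)
        then show ?thesis by blast
      next
        case 3
        then have "(n - p, q) \<in> I" using g q m1 n3 by (auto simp: I_def inA)
        moreover have "g = tau1 n (n - p, q)" using g 3 m1 by (auto simp: tau1_def)
        ultimately show ?thesis by blast
      next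
        case 4
        then have "n - p = p" using m1 by linarith
        then show ?thesis using g by (simp add: tau1_def)
      qed
    qed
    have e0: "(\<lambda>k. gel k - gel (tau1 n k) :: nat \<times> nat \<Rightarrow> 'a) (i, 0) = ael n (int i) - ael n (- int i)" if "i \<in> A" for i
    proof -
      have "(n - i) mod n = n - i" using that m1 n3 inA by auto
      then show ?thesis unfolding u[OF that] by (simp add: tau1_def)
    qed
    have e1: "(\<lambda>k. gel k - gel (tau1 n k) :: nat \<times> nat \<Rightarrow> 'a) (i, 1) = gmul n (ael n (int i) - ael n (- int i)) bel" if "i \<in> A" for i
    proof -
      have b: "i < n" "n - i < n" "(n - i) mod n = n - i" using that m1 n3 inA by auto
      have d1: "dmul n (i,0) (0,1) = (i,1)" using b by (simp add: dmul_def)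
      have d2: "dmul n (n-i,0) (0,1) = (n-i,1)" using b by (simp add: dmul_def)
      have "gmul n (ael n (int i) - ael n (- int i)) (bel :: nat \<times> nat \<Rightarrow> 'a) = gmul n (gel (i,0)) (gel (0,1)) - gmul n (gel (n-i,0)) (gel (0,1))"
        unfolding u[OF that] bel_def by (simp add: gmul_diff_left)
      also have "\<dots> = gel (i,1) - gel (n-i,1)"
      proof -
        have "gmul n (gel (i,0)) (gel (0,1)) = (gel (dmul n (i,0) (0,1)) :: nat \<times> nat \<Rightarrow> 'a)"
          by (rule gmul_gel_gel) (use b n3 in \<open>simp_all add: dih_iff\<close>)
        moreover have "gmul n (gel (n-i,0)) (gel (0,1)) = (gel (dmul n (n-i,0) (0,1)) :: nat \<times> nat \<Rightarrow> 'a)"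
          by (rule gmul_gel_gel) (use b n3 in \<open>simp_all add: dih_iff\<close>)
        ultimately show ?thesis by (simp only: d1 d2)
      qed
      finally show ?thesis using b by (simp add: tau1_def)
    qed
    have "(\<lambda>k. gel k - gel (tau1 n k) :: nat \<times> nat \<Rightarrow> 'a) ` I
        = (\<lambda>i. (\<lambda>k. gel k - gel (tau1 n k) :: nat \<times> nat \<Rightarrow> 'a) (i, 0)) ` A \<union> (\<lambda>i. (\<lambda>k. gel k - gel (tau1 n k) :: nat \<times> nat \<Rightarrow> 'a) (i, 1)) ` A"
      unfolding I_def by auto
    also have "\<dots> = (\<lambda>i. ael n (int i) - ael n (- int i)) ` A \<union> (\<lambda>i. gmul n (ael n (int i) - ael n (- int i)) bel) ` A"
      using e0 e1 by (intro arg_cong2[where f="(\<union>)"] image_cong) auto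
    finally show "(\<lambda>i. ael n (int i) - ael n (- int i)) ` {1..(n - 1) div 2} \<union>
            (\<lambda>i. gmul n (ael n (int i) - ael n (- int i)) (bel :: nat \<times> nat \<Rightarrow> 'a)) ` {1..(n - 1) div 2}
        = (\<lambda>k. gel k - gel (tau1 n k)) ` I" unfolding A_def m_def by simp
  qed
  define w2 :: "nat \<times> nat \<Rightarrow> nat \<times> nat" where "w2 k = (if snd k = 0 then k else (fst k + 1, 1))" for k
  have P2: "is_basis_of (anticent n (gmul n (ael n 1) (bel :: nat \<times> nat \<Rightarrow> 'a)))
           ((\<lambda>i. ael n (int i) - ael n (- int i)) ` {1..(n - 1) div 2} \<union>
            (\<lambda>i. gmul n (gmul n (ael n 1) (ael n (int i) - ael n (- int i))) bel) ` {1..(n - 1) div 2})"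
  proof (rule basis_generic[where \<tau> = "tau2 n" and w = w2 and I = I, OF anticent_ab[OF n3] _ _ _ _ _ _ two finI])
    show "tau2 n x \<in> dih n" if "x \<in> dih n" for x using that n3 by (auto simp: tau2_def dih_def)
    show "tau2 n (tau2 n x) = x" if xd: "x \<in> dih n" for x
    proof -
      obtain p q where x: "x = (p,q)" "p < n" "q < 2" using xd by (cases x) (auto simp: dih_iff)
      show ?thesis
      proof (cases "q = 0")
        case True
        then show ?thesis using x n3 by (auto simp: tau2_def mod_2n)
      next
        case False
        then have q1: "q = 1" using x by simp
        consider "p = 0" | "p = 1" | "3 \<le> p" | "p = 2" by linarith
        then show ?thesis
        proof cases
          case 4
          have "(n + 2 - 2) mod n = 0" by simp
          moreover have "(n + 2 - 0) mod n = 2" using n3 by (simp add: mod_2n)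
          ultimately show ?thesis using x q1 4 by (simp add: tau2_def)
        next
          case 1
          have "(n + 2) mod n = 2" using n3 by (simp add: mod_2n)
          moreover have "(n + 2 - 2) mod n = 0" by simp
          ultimately show ?thesis using x q1 1 by (simp add: tau2_def)
        next
          case 2
          have "(n + 2 - 1) mod n = 1" using n3 by (simp add: mod_2n)
          then show ?thesis using x q1 2 by (simp add: tau2_def)
        next
          case 3
          have a: "(n + 2 - p) mod n = n + 2 - p" using x 3 by simp
          have "(n + 2 - (n + 2 - p)) mod n = p" using x 3 by simp
          then show ?thesis using x q1 a by (simp add: tau2_def)
        qed
      qed
    qed
    show "w2 k \<in> dih n" if "k \<in> I" for k using that m1 n3 by (auto simp: I_def inA dih_def w2_def)
    show "inj_on w2 I" by (auto simp: inj_on_def I_def w2_def)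
    show "w2 k \<noteq> tau2 n (w2 k')" if kI: "k \<in> I" "k' \<in> I" for k k'
    proof -
      obtain i j i' j' where kk: "k = (i,j)" "k' = (i',j')" "1 \<le> i" "i \<le> m" "1 \<le> i'" "i' \<le> m" "j \<in> {0,1}" "j' \<in> {0,1}"
        using kI by (auto simp: I_def inA)
      show ?thesis
      proof (cases "j = j'")
        case False
        then show ?thesis using kk by (auto simp: w2_def tau2_def)
      next
        case True
        show ?thesis
        proof (cases "j = 0")
          case j0: True
          have "(n - i') mod n = n - i'" using kk m1 n3 by simp
          moreover have "i \<noteq> n - i'" using kk m1 n3 by linarith
          ultimately show ?thesis using kk True j0 by (simp add: w2_def tau2_def)
        next
          case j1: False
          then have jj: "j = 1" "j' = 1" using kk True by auto
          have "(n + 2 - (i' + 1)) mod n \<noteq> i + 1"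
          proof (cases "i' = 1")
            case True
            then show ?thesis by simp
          next
            case False
            then have "(n + 2 - (i' + 1)) mod n = n + 1 - i'" using kk m1 n3 by simp
            moreover have "n + 1 - i' \<noteq> i + 1" using kk m1 n3 False by linarith
            ultimately show ?thesis by simp
          qed
          then show ?thesis using kk jj by (simp add: w2_def tau2_def)
        qed
      qed
    qed
    show "(\<exists>k\<in>I. g = w2 k \<or> g = tau2 n (w2 k)) \<or> tau2 n g = g" if gd: "g \<in> dih n" for g
    proof -
      obtain p q where g: "g = (p,q)" "p < n" "q < 2" using gd by (cases g) (auto simp: dih_iff)
      have m_ge: "m \<ge> 1" using m1 n3 by linarith
      show ?thesis
      proof (cases "q = 0")
        case q0: True
        consider "p = 0" | "1 \<le> p \<and> p \<le> m" | "n - m \<le> p" | "m < p \<and> p < n - m" by linarith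
        then show ?thesis
        proof cases
          case 1 then show ?thesis using g q0 by (simp add: tau2_def)
        next
          case 2 then have "(p, 0) \<in> I" "g = w2 (p, 0)" using g q0 by (auto simp: I_def inA w2_def)
          then show ?thesis by blast
        next
          case 3
          then have "(n - p, 0) \<in> I" using g m1 n3 by (auto simp: I_def inA)
          moreover have "g = tau2 n (w2 (n - p, 0))" using g q0 3 m1 by (auto simp: tau2_def w2_def)
          ultimately show ?thesis by blast
        next
          case 4
          then have "n - p = p" using m1 by linarith
          then show ?thesis using g q0 by (simp add: tau2_def)
        qed
      next
        case False
        then have q1: "q = 1" using g by simp
        consider "p = 0" | "p = 1" | "2 \<le> p \<and> p \<le> m + 1" | "n + 1 - m \<le> p" | "m + 1 < p \<and> p < n + 1 - m" by linarith
        then show ?thesis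
        proof cases
          case 1
          have "(1, 1) \<in> I" using m_ge by (auto simp: I_def inA)
          moreover have "g = tau2 n (w2 (1, 1))" using g q1 1 by (simp add: tau2_def w2_def)
          ultimately show ?thesis by blast
        next
          case 2
          have "(n + 2 - 1) mod n = 1" using n3 by (simp add: mod_2n)
          then show ?thesis using g q1 2 by (simp add: tau2_def)
        next
          case 3
          then have "(p - 1, 1) \<in> I" "g = w2 (p - 1, 1)" using g q1 by (auto simp: I_def inA w2_def)
          then show ?thesis by blast
        next
          case 4
          then have "(n + 1 - p, 1) \<in> I" using g m1 n3 by (auto simp: I_def inA)
          moreover have "g = tau2 n (w2 (n + 1 - p, 1))" using g q1 4 m1 by (auto simp: tau2_def w2_def)
          ultimately show ?thesis by blast
        next
          case 5
          then have "n + 2 - p = p" using m1 by linarith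
          then show ?thesis using g q1 by (simp add: tau2_def)
        qed
      qed
    qed
    have a1: "ael n 1 = (gel (1,0) :: nat \<times> nat \<Rightarrow> 'a)" using ael_pos[of 1 n] n3 by simp
    have e0: "(\<lambda>k. gel (w2 k) - gel (tau2 n (w2 k)) :: nat \<times> nat \<Rightarrow> 'a) (i, 0) = ael n (int i) - ael n (- int i)" if "i \<in> A" for i
    proof -
      have "(n - i) mod n = n - i" using that m1 n3 inA by auto
      then show ?thesis unfolding u[OF that] by (simp add: tau2_def w2_def)
    qed
    have e1: "(\<lambda>k. gel (w2 k) - gel (tau2 n (w2 k)) :: nat \<times> nat \<Rightarrow> 'a) (i, 1) = gmul n (gmul n (ael n 1) (ael n (int i) - ael n (- int i))) bel" if "i \<in> A" for i
    proof -
      define c where "c = (1 + (n - i)) mod n"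
      have b: "i < n" "n - i < n" "i + 1 < n" "c < n" using that m1 n3 inA by (auto simp: c_def)
      have d1: "dmul n (1,0) (i,0) = (i+1,0)" using b by (simp add: dmul_def)
      have d2: "dmul n (1,0) (n-i,0) = (c,0)" using b by (simp add: dmul_def c_def)
      have d3: "dmul n (i+1,0) (0,1) = (i+1,1)" using b by (simp add: dmul_def)
      have d4: "dmul n (c,0) (0,1) = (c,1)" using b by (simp add: dmul_def)
      have "gmul n (gmul n (ael n 1) (ael n (int i) - ael n (- int i))) (bel :: nat \<times> nat \<Rightarrow> 'a)
          = gmul n (gmul n (gel (1,0)) (gel (i,0)) - gmul n (gel (1,0)) (gel (n-i,0))) (gel (0,1))"
        unfolding u[OF that] bel_def a1 by (simp add: gmul_diff_right)
      also have "\<dots> = gmul n (gel (i+1,0)) (gel (0,1)) - gmul n (gel (c,0)) (gel (0,1))"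
      proof -
        have "gmul n (gel (1,0)) (gel (i,0)) = (gel (dmul n (1,0) (i,0)) :: nat \<times> nat \<Rightarrow> 'a)"
          by (rule gmul_gel_gel) (use b n3 in \<open>simp_all add: dih_iff\<close>)
        moreover have "gmul n (gel (1,0)) (gel (n-i,0)) = (gel (dmul n (1,0) (n-i,0)) :: nat \<times> nat \<Rightarrow> 'a)"
          by (rule gmul_gel_gel) (use b n3 in \<open>simp_all add: dih_iff\<close>)
        ultimately show ?thesis by (simp only: d1 d2 gmul_diff_left)
      qed
      also have "\<dots> = gel (i+1,1) - gel (c,1)"
      proof -
        have "gmul n (gel (i+1,0)) (gel (0,1)) = (gel (dmul n (i+1,0) (0,1)) :: nat \<times> nat \<Rightarrow> 'a)"
          by (rule gmul_gel_gel) (use b n3 in \<open>simp_all add: dih_iff\<close>)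
        moreover have "gmul n (gel (c,0)) (gel (0,1)) = (gel (dmul n (c,0) (0,1)) :: nat \<times> nat \<Rightarrow> 'a)"
          by (rule gmul_gel_gel) (use b n3 in \<open>simp_all add: dih_iff\<close>)
        ultimately show ?thesis by (simp only: d3 d4)
      qed
      finally have L: "gmul n (gmul n (ael n 1) (ael n (int i) - ael n (- int i))) (bel :: nat \<times> nat \<Rightarrow> 'a) = gel (i+1,1) - gel (c,1)" .
      have "n + 2 - (i + 1) = 1 + (n - i)" using b by simp
      then have "tau2 n (w2 (i,1)) = (c, 1)" by (simp add: tau2_def w2_def c_def)
      then show ?thesis using L by (simp add: w2_def)
    qed
    have "(\<lambda>k. gel (w2 k) - gel (tau2 n (w2 k)) :: nat \<times> nat \<Rightarrow> 'a) ` I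
        = (\<lambda>i. (\<lambda>k. gel (w2 k) - gel (tau2 n (w2 k)) :: nat \<times> nat \<Rightarrow> 'a) (i, 0)) ` A \<union> (\<lambda>i. (\<lambda>k. gel (w2 k) - gel (tau2 n (w2 k)) :: nat \<times> nat \<Rightarrow> 'a) (i, 1)) ` A"
      unfolding I_def by auto
    also have "\<dots> = (\<lambda>i. ael n (int i) - ael n (- int i)) ` A \<union> (\<lambda>i. gmul n (gmul n (ael n 1) (ael n (int i) - ael n (- int i))) bel) ` A"
      using e0 e1 by (intro arg_cong2[where f="(\<union>)"] image_cong) auto
    finally show "(\<lambda>i. ael n (int i) - ael n (- int i)) ` {1..(n - 1) div 2} \<union>
            (\<lambda>i. gmul n (gmul n (ael n 1) (ael n (int i) - ael n (- int i))) (bel :: nat \<times> nat \<Rightarrow> 'a)) ` {1..(n - 1) div 2}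
        = (\<lambda>k. gel (w2 k) - gel (tau2 n (w2 k))) ` I" unfolding A_def m_def by simp
  qed
  show ?thesis using P1 P2 by blast
qed

end
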